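(* Let $m\ge 1$ and let $s_1,\dots,s_{2m}$ be positive integers. Put $S=\sum_{i=1}^{2m}s_i$, $s_{\max}=\max_i s_i$, $M=S+1$, $d_i=s_{\max}-s_i$, and $\epsilon=\frac{1}{2M}$. Let $$P_R=\Big\{x\in\mathbb{R}^{2m}:\ 0\le x_i\le 1\ \forall i,\ \sum_{i=1}^{2m}(M+s_i)x_i\le \tfrac12 S+mM+\epsilon,\ \sum_{i=1}^{2m}(M+d_i)x_i\le \tfrac12\sum_{i=1}^{2m}d_i+mM+\epsilon\Big\}.$$ Let $v$ be a vertex of $P_R$ having exactly $2m-1$ coordinates in $\{0,1\}$ (i.e. lying on exactly $2m-1$ of the box constraints $0\le x_i\le 1$), and suppose $|\{i: v_i=1\}|=m-1$. Then $v$ is not degenerate, i.e. at most $2m$ of the $4m+2$ defining inequalities of $P_R$ are active at $v$ (equivalently, the two knapsack inequalities are not both active at $v$).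
   Context: The inequalities $0\le x_i\le1$ are the box constraints; the other two inequalities are the knapsack constraints. A vertex of $P_R$ is degenerate if more than $2m$ of the defining inequalities are active at it. *)

theory Defs
  imports "HOL-Analysis.Analysis"
begin

definition sumS :: "('n::finite \<Rightarrow> nat) \<Rightarrow> real" where
  "sumS s = real (\<Sum>i\<in>UNIV. s i)"

definition smax :: "('n::finite \<Rightarrow> nat) \<Rightarrow> nat" where
  "smax s = Max (range s)"

definition dd :: "('n::finite \<Rightarrow> nat) \<Rightarrow> 'n \<Rightarrow> real" where
  "dd s i = real (smax s) - real (s i)"

definition bigM :: "('n::finite \<Rightarrow> nat) \<Rightarrow> real" where
  "bigM s = sumS s + 1"

definition eps :: "('n::finite \<Rightarrow> nat) \<Rightarrow> real" where
  "eps s = 1 / (2 * bigM s)"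

definition knap1_lhs :: "('n::finite \<Rightarrow> nat) \<Rightarrow> real^'n \<Rightarrow> real" where
  "knap1_lhs s x = (\<Sum>i\<in>UNIV. (bigM s + real (s i)) * x $ i)"

definition knap1_rhs :: "nat \<Rightarrow> ('n::finite \<Rightarrow> nat) \<Rightarrow> real" where
  "knap1_rhs m s = sumS s / 2 + real m * bigM s + eps s"

definition knap2_lhs :: "('n::finite \<Rightarrow> nat) \<Rightarrow> real^'n \<Rightarrow> real" where
  "knap2_lhs s x = (\<Sum>i\<in>UNIV. (bigM s + dd s i) * x $ i)"

definition knap2_rhs :: "nat \<Rightarrow> ('n::finite \<Rightarrow> nat) \<Rightarrow> real" where
  "knap2_rhs m s = (\<Sum>i\<in>UNIV. dd s i) / 2 + real m * bigM s + eps s"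

definition PR :: "nat \<Rightarrow> ('n::finite \<Rightarrow> nat) \<Rightarrow> (real^'n) set" where
  "PR m s = {x. (\<forall>i. 0 \<le> x $ i \<and> x $ i \<le> 1)
              \<and> knap1_lhs s x \<le> knap1_rhs m s
              \<and> knap2_lhs s x \<le> knap2_rhs m s}"

definition num_active :: "nat \<Rightarrow> ('n::finite \<Rightarrow> nat) \<Rightarrow> real^'n \<Rightarrow> nat" where
  "num_active m s x = card {i. x $ i = 0} + card {i. x $ i = 1}
     + (if knap1_lhs s x = knap1_rhs m s then 1 else 0)
     + (if knap2_lhs s x = knap2_rhs m s then 1 else 0)"

end

theory Submission
  imports Defs
begin

theorem lemma2:
  fixes m :: nat and s :: "'n::finite \<Rightarrow> nat" and v :: "real^'n"
  assumes "m \<ge> 1" and "CARD('n) = 2 * m"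
    and "\<forall>i. s i > 0"
    and "v extreme_point_of (PR m s)"
    and "card {i. v $ i \<in> {0, 1}} = 2 * m - 1"
    and "card {i. v $ i = 1} = m - 1"
  shows "num_active m s v \<le> 2 * m"
proof -
  define A where "A = {i. v $ i \<in> {0, 1}}"
  define O1 where "O1 = {i. v $ i = 1}"
  have vP: "v \<in> PR m s" using assms(4) by (simp add: extreme_point_of_def)
  have box: "\<And>i. 0 \<le> v $ i \<and> v $ i \<le> 1" using vP by (simp add: PR_def)
  have cA: "card (- A) = 1"
  proof -
    have "- A = UNIV - A" by auto
    hence "card (- A) = CARD('n) - card A" by (simp add: card_Diff_subset)
    thus ?thesis using assms(2,5) assms(1) unfolding A_def by simp
  qed
  then obtain j where jA: "- A = {j}" using card_1_singletonE by blast
  have vj: "v $ j \<noteq> 0" "v $ j \<noteq> 1" using jA unfolding A_def by auto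
  have oth: "\<And>i. i \<noteq> j \<Longrightarrow> v $ i = 0 \<or> v $ i = 1"
    using jA unfolding A_def by auto
  have zeros: "card {i. v $ i = 0} + card {i. v $ i = 1} = 2 * m - 1"
  proof -
    have "A = {i. v $ i = 0} \<union> {i. v $ i = 1}" unfolding A_def by auto
    moreover have "{i. v $ i = 0} \<inter> {i. v $ i = 1} = {}" by auto
    ultimately have "card A = card {i. v $ i = 0} + card {i. v $ i = 1}"
      by (simp add: card_Un_disjoint)
    thus ?thesis using assms(5) unfolding A_def by simp
  qed
  have s1: "(\<Sum>i\<in>O1. v $ i) = real (m - 1)"
    using assms(6) unfolding O1_def by simp
  have s2: "(\<Sum>i\<in>-O1. v $ i) = v $ j"
  proof -
    have "(\<Sum>i\<in>-O1. v $ i) = (\<Sum>i\<in>{j}. v $ i)"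
      by (rule sum.mono_neutral_right) (use vj oth in \<open>auto simp: O1_def\<close>)
    thus ?thesis by simp
  qed
  have sv: "(\<Sum>i\<in>UNIV. v $ i) < real m"
  proof -
    have "(\<Sum>i\<in>UNIV. v $ i) = (\<Sum>i\<in>O1. v $ i) + (\<Sum>i\<in>-O1. v $ i)"
      using sum.union_disjoint[of O1 "- O1" "\<lambda>i. v $ i"] by (simp add: Compl_partition)
    also have "\<dots> < real m" using s1 s2 box[of j] vj assms(1) by (simp add: of_nat_diff)
    finally show ?thesis .
  qed
  have Mpos: "bigM s > 0" unfolding bigM_def sumS_def by (simp add: add_nonneg_pos sum_nonneg)
  have epos: "eps s > 0" using Mpos unfolding eps_def by simp
  have lhs: "knap1_lhs s v + knap2_lhs s v = (2 * bigM s + real (smax s)) * (\<Sum>i\<in>UNIV. v $ i)"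
  proof -
    have "knap1_lhs s v + knap2_lhs s v = (\<Sum>i\<in>UNIV. (2 * bigM s + real (smax s)) * v $ i)"
      unfolding knap1_lhs_def knap2_lhs_def dd_def sum.distrib[symmetric]
      by (rule sum.cong) (auto simp: algebra_simps)
    thus ?thesis by (simp add: sum_distrib_left)
  qed
  have sd: "(\<Sum>i\<in>UNIV. dd s i) = real (2 * m) * real (smax s) - sumS s"
    unfolding dd_def sumS_def using assms(2) by (simp add: sum_subtractf)
  have rhs: "knap1_rhs m s + knap2_rhs m s = (2 * bigM s + real (smax s)) * real m + 2 * eps s"
    unfolding knap1_rhs_def knap2_rhs_def sd by (simp add: algebra_simps add_divide_distrib[symmetric])
  have pos: "2 * bigM s + real (smax s) > 0" using Mpos by simp
  have "knap1_lhs s v + knap2_lhs s v < knap1_rhs m s + knap2_rhs m s"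
  proof -
    have "(2 * bigM s + real (smax s)) * (\<Sum>i\<in>UNIV. v $ i) < (2 * bigM s + real (smax s)) * real m"
      using mult_strict_left_mono[OF sv pos] .
    thus ?thesis unfolding lhs rhs using epos by linarith
  qed
  hence "\<not> (knap1_lhs s v = knap1_rhs m s \<and> knap2_lhs s v = knap2_rhs m s)" by auto
  thus ?thesis unfolding num_active_def using zeros assms(1) by auto
qed

end
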